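(* Let $U^{(n)}$ be uniformly distributed on $\{1,\dots,n\}$ and, for $1\le m<n$, put $\widetilde U^{(n,m)}:=\prod_{m<p\le n,\ p\ \text{prime}}p^{\mathbbm{1}_{\{\lambda_p(U^{(n)})\ge1\}}}$. Assume that $m_n\le n^{1/2}$ for all sufficiently large $n$ and $m_n\to\infty$ as $n\to\infty$. Then $${\rm Var}\bigl(\log\widetilde U^{(n,m_n)}\bigr)\sim 2^{-1}\log^2 m_n,\qquad n\to\infty.$$
   Context: For a prime $p$ and $k\in\mathbb{N}$, $\lambda_p(k)$ is the exponent of $p$ in the prime factorization of $k$. $a_n\sim b_n$ means $a_n/b_n\to1$. *)

theory Defs
  imports "HOL-Probability.Probability" "HOL-Library.Landau_Symbols"
    "HOL-Computational_Algebra.Primes"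
begin

definition Utilde :: "nat \<Rightarrow> nat \<Rightarrow> nat \<Rightarrow> nat" where
  "Utilde n m k = (\<Prod>p \<in> {p. prime p \<and> m < p \<and> p \<le> n}.
      p ^ (if multiplicity p k \<ge> 1 then 1 else 0))"

end

theory Submission
  imports Defs
begin


definition PR :: "nat \<Rightarrow> nat set" where "PR N = {p. prime p \<and> p \<le> N}"

lemma finite_PR[simp]: "finite (PR N)" unfolding PR_def by auto

lemma sum_if_card:
  "finite A \<Longrightarrow> (\<Sum>x\<in>A. if P x then 1 else (0::real)) = real (card {x\<in>A. P x})"
proof (induction A rule: finite_induct)
  case (insert a A)
  have "{x \<in> insert a A. P x} = (if P a then insert a {x\<in>A. P x} else {x\<in>A. P x})" by auto
  thus ?case using insert by auto
qed simp

lemma count_mult: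
  assumes "prime p" "1 \<le> k" "k \<le> N"
  shows "(\<Sum>j\<in>{1..N}. (if p^j dvd k then 1 else 0::real)) = real (multiplicity p k)"
proof -
  have "p ^ multiplicity p k dvd k" by (simp add: multiplicity_dvd)
  hence "p ^ multiplicity p k \<le> k" using assms by (intro dvd_imp_le) auto
  moreover have "multiplicity p k < p ^ multiplicity p k"
  proof -
    have "multiplicity p k < 2 ^ multiplicity p k" by (rule less_exp)
    also have "\<dots> \<le> p ^ multiplicity p k" using prime_ge_2_nat[OF assms(1)] by (intro power_mono) auto
    finally show ?thesis .
  qed
  ultimately have le: "multiplicity p k \<le> N" using assms by linarith
  have "(\<Sum>j\<in>{1..N}. (if p^j dvd k then 1 else 0::real)) = card {j\<in>{1..N}. p^j dvd k}"
    by (rule sum_if_card) simp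
  also have "{j\<in>{1..N}. p^j dvd k} = {1..multiplicity p k}"
  proof -
    have "k \<noteq> 0" "\<not> is_unit p" using assms by auto
    note pw = power_dvd_iff_le_multiplicity[OF this]
    show ?thesis using le by (auto simp: pw)
  qed
  finally show ?thesis by simp
qed


lemma ln_as_sum:
  assumes "1 \<le> k" "k \<le> N"
  shows "ln (real k) = (\<Sum>p\<in>PR N. \<Sum>j\<in>{1..N}. ln (real p) * (if p^j dvd k then 1 else 0))"
proof -
  have "ln (real k) = ln (real (\<Prod>p\<in>prime_factors k. p ^ multiplicity p k))"
    using prime_factorization_nat[of k] assms by simp
  also have "\<dots> = (\<Sum>p\<in>prime_factors k. real (multiplicity p k) * ln (real p))"
    by (simp only: of_nat_prod of_nat_power, subst ln_prod) (auto simp: ln_realpow prime_gt_0_nat in_prime_factors_iff)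
  also have "\<dots> = (\<Sum>p\<in>PR N. real (multiplicity p k) * ln (real p))"
  proof (rule sum.mono_neutral_left)
    show "prime_factors k \<subseteq> PR N" using assms
      by (auto simp: PR_def in_prime_factors_iff intro: order.trans[OF dvd_imp_le])
    show "\<forall>i\<in>PR N - prime_factors k. real (multiplicity i k) * ln (real i) = 0"
      using assms by (auto simp: PR_def in_prime_factors_iff not_dvd_imp_multiplicity_0)
  qed simp
  also have "\<dots> = (\<Sum>p\<in>PR N. \<Sum>j\<in>{1..N}. ln (real p) * (if p^j dvd k then 1 else 0))"
  proof (rule sum.cong)
    fix p assume "p \<in> PR N"
    hence "prime p" by (simp add: PR_def)
    thus "real (multiplicity p k) * ln (real p) = (\<Sum>j\<in>{1..N}. ln (real p) * (if p^j dvd k then 1 else 0))"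
      using count_mult[of p k N] assms by (simp add: sum_distrib_left[symmetric])
  qed simp
  finally show ?thesis .
qed

lemma card_multiples:
  assumes "(d::nat) > 0"
  shows "card {k\<in>{1..n}. d dvd k} = n div d"
proof -
  have "{k\<in>{1..n}. d dvd k} = (\<lambda>i. d*i) ` {1..n div d}"
  proof safe
    fix k assume k: "k \<in> {1..n}" "d dvd k"
    then obtain i where i: "k = d*i" by (auto simp: dvd_def)
    with k assms have "i \<in> {1..n div d}"
      by (auto simp: less_eq_div_iff_mult_less_eq mult.commute)
    thus "k \<in> (\<lambda>i. d*i) ` {1..n div d}" using i by auto
  next
    fix i assume "i \<in> {1..n div d}"
    thus "d*i \<in> {1..n}" using assms
      by (auto simp: less_eq_div_iff_mult_less_eq mult.commute)
  qed auto
  also have "card \<dots> = n div d"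
    using assms by (subst card_image) (auto simp: inj_on_def)
  finally show ?thesis .
qed

lemma sum_indicator_dvd:
  assumes "(d::nat) > 0"
  shows "(\<Sum>k\<in>{1..n}. (if d dvd k then 1 else 0::real)) = real (n div d)"
proof -
  have "(\<Sum>k\<in>{1..n}. (if d dvd k then 1 else 0::real)) = card {k\<in>{1..n}. d dvd k}"
    by (rule sum_if_card) simp
  thus ?thesis using card_multiples[OF assms, of n] by simp
qed

lemma ln_fact_sum:
  assumes "x \<le> N"
  shows "ln (fact x :: real) = (\<Sum>p\<in>PR N. \<Sum>j\<in>{1..N}. ln (real p) * real (x div p^j))"
proof -
  have "ln (fact x :: real) = (\<Sum>k\<in>{1..x}. ln (real k))"
    by (simp add: fact_prod, subst ln_prod) auto
  also have "\<dots> = (\<Sum>k\<in>{1..x}. \<Sum>p\<in>PR N. \<Sum>j\<in>{1..N}. ln (real p) * (if p^j dvd k then 1 else 0))"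
    using assms by (intro sum.cong refl ln_as_sum) auto
  also have "\<dots> = (\<Sum>p\<in>PR N. \<Sum>j\<in>{1..N}. \<Sum>k\<in>{1..x}. ln (real p) * (if p^j dvd k then 1 else 0))"
  proof -
    have "(\<Sum>k\<in>{1..x}. \<Sum>p\<in>PR N. \<Sum>j\<in>{1..N}. ln (real p) * (if p^j dvd k then 1 else (0::real)))
        = (\<Sum>p\<in>PR N. \<Sum>k\<in>{1..x}. \<Sum>j\<in>{1..N}. ln (real p) * (if p^j dvd k then 1 else 0))"
      by (rule sum.swap)
    also have "\<dots> = (\<Sum>p\<in>PR N. \<Sum>j\<in>{1..N}. \<Sum>k\<in>{1..x}. ln (real p) * (if p^j dvd k then 1 else 0))"
      by (rule sum.cong[OF refl], rule sum.swap)
    finally show ?thesis .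
  qed
  also have "\<dots> = (\<Sum>p\<in>PR N. \<Sum>j\<in>{1..N}. ln (real p) * real (x div p^j))"
  proof (intro sum.cong refl)
    fix p j assume "p \<in> PR N"
    hence "p > 0" by (auto simp: PR_def prime_gt_0_nat)
    thus "(\<Sum>k\<in>{1..x}. ln (real p) * (if p^j dvd k then 1 else 0)) = ln (real p) * real (x div p^j)"
      using sum_indicator_dvd[of "p^j" x] by (simp add: sum_distrib_left[symmetric])
  qed
  finally show ?thesis .
qed



lemma ln2_ge_half: "ln (2::real) \<ge> 1/2"
proof -
  have "ln (1/2::real) \<le> 1/2 - 1" by (rule ln_le_minus_one) simp
  thus ?thesis by (simp add: ln_div)
qed

lemma real_div_le: "real (x div d) \<le> real x / real d"
proof (cases "d = 0")
  case False
  have "(x div d) * d \<le> x" by (simp add: div_times_less_eq_dividend)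
  hence "real (x div d) * real d \<le> real x" by (metis of_nat_le_iff of_nat_mult)
  thus ?thesis using False by (simp add: field_simps)
qed simp

lemma real_div_ge:
  assumes "(d::nat) > 0" shows "real (x div d) \<ge> real x / real d - 1"
proof -
  have "x < (x div d + 1) * d" using assms
    by (metis add.commute div_mult_mod_eq mod_less_divisor mult.commute nat_add_left_cancel_less distrib_left mult_1_right)
  hence "real x < (real (x div d) + 1) * real d" by (metis of_nat_1 of_nat_add of_nat_less_iff of_nat_mult)
  thus ?thesis using assms by (simp add: field_simps)
qed

definition theta :: "nat \<Rightarrow> real" where "theta x = (\<Sum>p\<in>PR x. ln (real p))"

lemma ln_prime_nonneg: "p \<in> PR N \<Longrightarrow> ln (real p) \<ge> 0"
  using prime_ge_1_nat by (auto simp: PR_def intro!: ln_ge_zero)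

lemma theta_nonneg: "theta x \<ge> 0"
  unfolding theta_def by (intro sum_nonneg ln_prime_nonneg)

lemma theta_step:
  assumes "x \<ge> 1"
  shows "theta x \<le> theta (x - x div 2) + real x * ln 2"
proof -
  define h where "h = x div 2"
  define h' where "h' = x - h"
  have hx: "h \<le> x" "h' \<le> x" "h + h' = x" "h \<le> h'" "x \<le> 2 * h'" unfolding h_def h'_def by auto
  have fpos: "\<And>n. (fact n :: real) > 0" by simp
  have C: "ln (real (x choose h)) = ln (fact x) - ln (fact h) - ln (fact h')"
    using binomial_fact[OF hx(1), where 'a=real] hx
    by (simp add: ln_div ln_mult fpos h'_def)
  have "real (x choose h) \<le> 2 ^ x" using binomial_le_pow2[of x h]
    by (metis of_nat_le_iff of_nat_numeral of_nat_power)
  moreover have "real (x choose h) > 0" using hx by simp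
  ultimately have "ln (real (x choose h)) \<le> ln (2 ^ x)" by simp
  hence Cle: "ln (real (x choose h)) \<le> real x * ln 2" by (simp add: ln_realpow)
  have C2: "ln (fact x) - ln (fact h) - ln (fact h') =
     (\<Sum>p\<in>PR x. \<Sum>j\<in>{1..x}. ln (real p) * (real (x div p^j) - real (h div p^j) - real (h' div p^j)))"
    using ln_fact_sum[of x x] ln_fact_sum[OF hx(1)] ln_fact_sum[OF hx(2)]
    by (simp add: sum_subtractf[symmetric] algebra_simps)
  have nn: "real (x div q) - real (h div q) - real (h' div q) \<ge> 0" for q
  proof -
    have "(h + h') div q = h div q + h' div q + (h mod q + h' mod q) div q" by (rule div_add1_eq)
    thus ?thesis using hx(3) by simp
  qed
  have one: "real (x div p) - real (h div p) - real (h' div p) = 1" if "p \<in> PR x" "h' < p" for p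
  proof -
    have "p \<le> x" using that by (auto simp: PR_def)
    have "x < 2 * p" using that hx by linarith
    hence "x div p = 1" using \<open>p \<le> x\<close> by (intro div_nat_eqI) (simp_all add: mult.commute)
    moreover have "h div p = 0" "h' div p = 0" using that hx by auto
    ultimately show ?thesis by simp
  qed
  have "theta x = (\<Sum>p\<in>PR x. if p \<le> h' then ln (real p) else 0) + (\<Sum>p\<in>PR x. if h' < p then ln (real p) else 0)"
    unfolding theta_def by (subst sum.distrib[symmetric]) (intro sum.cong, auto)
  also have "(\<Sum>p\<in>PR x. if p \<le> h' then ln (real p) else 0) = theta h'"
    unfolding theta_def using hx by (subst sum.inter_filter[symmetric]) (auto intro!: sum.cong simp: PR_def)
  also have "(\<Sum>p\<in>PR x. if h' < p then ln (real p) else 0) \<le>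
     (\<Sum>p\<in>PR x. \<Sum>j\<in>{1..x}. ln (real p) * (real (x div p^j) - real (h div p^j) - real (h' div p^j)))"
  proof (rule sum_mono)
    fix p assume p: "p \<in> PR x"
    have "(if h' < p then ln (real p) else 0) \<le> ln (real p) * (real (x div p^1) - real (h div p^1) - real (h' div p^1))"
      using one[OF p] nn[of p] ln_prime_nonneg[OF p] by auto
    also have "\<dots> \<le> (\<Sum>j\<in>{1..x}. ln (real p) * (real (x div p^j) - real (h div p^j) - real (h' div p^j)))"
      using assms by (intro member_le_sum) (auto intro!: mult_nonneg_nonneg nn ln_prime_nonneg[OF p])
    finally show "(if h' < p then ln (real p) else 0) \<le> \<dots>" .
  qed
  finally show ?thesis using C C2 Cle unfolding h'_def h_def by linarith
qed

lemma theta_bound: "theta x \<le> 4 * ln 2 * real x"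
proof (induction x rule: less_induct)
  case (less x)
  show ?case
  proof (cases "x \<le> 1")
    case True
    hence "PR x = {}" by (auto simp: PR_def dest: prime_gt_1_nat)
    thus ?thesis by (simp add: theta_def)
  next
    case False
    hence lt: "x - x div 2 < x" by auto
    have "theta x \<le> theta (x - x div 2) + real x * ln 2" using False by (intro theta_step) auto
    also have "\<dots> \<le> 4 * ln 2 * real (x - x div 2) + real x * ln 2" using less[OF lt] by simp
    also have "2 * (x - x div 2) \<le> x + 1" by linarith
    hence "real (2 * (x - x div 2)) \<le> real (x + 1)" by (simp only: of_nat_le_iff)
    hence "real (x - x div 2) \<le> (real x + 1) / 2" by simp
    hence "4 * ln 2 * real (x - x div 2) \<le> 4 * ln 2 * ((real x + 1) / 2)" by (intro mult_left_mono) auto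
    finally have "theta x \<le> 4 * ln 2 * ((real x + 1) / 2) + real x * ln 2" by simp
    moreover have "4 * ln 2 * ((real x + 1) / 2) + real x * ln 2 \<le> 4 * ln 2 * real x"
      using False ln2_ge_half by (simp add: field_simps)
    ultimately show ?thesis by linarith
  qed
qed

lemma theta_mono: "x \<le> y \<Longrightarrow> theta x \<le> theta y"
  unfolding theta_def by (intro sum_mono2) (auto simp: PR_def intro: ln_prime_nonneg)



lemma ln_fact_le: "ln (fact x :: real) \<le> real x * ln (real x)"
proof (cases "x = 0")
  case False
  have "(fact x :: real) \<le> real x ^ x" using fact_le_power[of x, where 'a=real] by simp
  hence "ln (fact x :: real) \<le> ln (real x ^ x)" using False by (subst ln_le_cancel_iff) auto
  thus ?thesis using False by (simp add: ln_realpow)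
qed simp

lemma ln_fact_ge: "ln (fact x :: real) \<ge> real x * ln (real x) - real x"
proof (induction x)
  case 0 show ?case by simp
next
  case (Suc n)
  have eq: "ln (fact (Suc n) :: real) = ln (fact n) + ln (real (Suc n))"
    by (simp add: ln_mult fact_Suc del: of_nat_Suc)
  have key: "real n * ln (real (Suc n)) - real n * ln (real n) \<le> 1"
  proof (cases "n = 0")
    case False
    have "ln (real (Suc n) / real n) \<le> real (Suc n) / real n - 1"
      using False by (intro ln_le_minus_one) auto
    hence "ln (real (Suc n)) - ln (real n) \<le> 1 / real n"
      using False by (simp add: ln_div field_simps)
    hence "real n * (ln (real (Suc n)) - ln (real n)) \<le> real n * (1 / real n)"
      by (intro mult_left_mono) auto
    thus ?thesis using False by (simp add: algebra_simps)
  qed simp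
  show ?case using Suc.IH key eq by (simp add: algebra_simps)
qed

definition G2 :: real where "G2 = (\<Sum>k. (ln (real k))^2 / (real k)^2)"

lemma ln_le_powr4: "k \<ge> 1 \<Longrightarrow> ln (real k) \<le> 4 * real k powr (1/4)"
proof -
  assume k: "k \<ge> 1"
  have "ln (real k powr (1/4)) \<le> real k powr (1/4) - 1" using k by (intro ln_le_minus_one) auto
  moreover have "ln (real k powr (1/4)) = ln (real k) / 4" using k by (simp add: ln_powr)
  ultimately show ?thesis by simp
qed

lemma summable_G2: "summable (\<lambda>k. (ln (real k))^2 / (real k)^2)"
proof -
  have "summable (\<lambda>k. 16 * real k powr (-3/2))" 
    by (intro summable_mult) (simp add: summable_real_powr_iff)
  then show ?thesis
  proof (rule summable_comparison_test'[where N=1])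
    fix k :: nat assume k: "k \<ge> 1"
    have l0: "0 \<le> ln (real k)" using k by simp
    have "(ln (real k))^2 \<le> (4 * real k powr (1/4))^2"
      using ln_le_powr4[OF k] l0 by (intro power_mono) auto
    also have "\<dots> = 16 * real k powr (1/2)"
      using k by (simp add: power2_eq_square powr_add[symmetric] algebra_simps)
    finally have "(ln (real k))^2 / (real k)^2 \<le> 16 * real k powr (1/2) / (real k)^2"
      by (intro divide_right_mono) auto
    also have "\<dots> = 16 * real k powr (-3/2)"
    proof -
      have "(real k)^2 = real k powr 2" using k by (simp add: powr_realpow)
      moreover have "real k powr (1/2 - 2) = real k powr (1/2) / real k powr 2" by (rule powr_diff)
      moreover have "(1/2 - 2 :: real) = -3/2" by simp
      ultimately show ?thesis by simp
    qed
    finally show "norm ((ln (real k))^2 / (real k)^2) \<le> 16 * real k powr (-3/2)" by simp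
  qed
qed

lemma sum_le_G2: "finite A \<Longrightarrow> (\<Sum>k\<in>A. (ln (real k))^2 / (real k)^2) \<le> G2"
  unfolding G2_def by (rule sum_le_suminf[OF summable_G2]) auto

lemma G2_nonneg: "G2 \<ge> 0"
  using sum_le_G2[of "{}"] by simp

lemma sumPR_lnp_sq: "(\<Sum>p\<in>PR x. ln (real p) / (real p)^2) \<le> 2 * G2"
proof -
  have "(\<Sum>p\<in>PR x. ln (real p) / (real p)^2) \<le> (\<Sum>p\<in>PR x. 2 * ((ln (real p))^2 / (real p)^2))"
  proof (rule sum_mono)
    fix p assume p: "p \<in> PR x"
    hence p2: "p \<ge> 2" by (auto simp: PR_def prime_ge_2_nat)
    have "ln (real p) \<ge> ln 2" using p2 by simp
    hence "ln (real p) \<ge> 1/2" using ln2_ge_half by linarith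
    hence "ln (real p) \<le> 2 * (ln (real p))^2" by (simp add: power2_eq_square)
    thus "ln (real p) / (real p)^2 \<le> 2 * ((ln (real p))^2 / (real p)^2)"
      by (simp add: divide_right_mono)
  qed
  also have "\<dots> \<le> 2 * G2" by (subst sum_distrib_left[symmetric]) (simp add: sum_le_G2)
  finally show ?thesis .
qed

lemma geom2:
  assumes "0 \<le> r" "r \<le> (1/2::real)"
  shows "(\<Sum>j\<in>{2..N}. r^j) \<le> 2 * r^2"
proof (cases "N < 2")
  case True thus ?thesis by simp
next
  case False
  have "(\<Sum>j\<in>{2..N}. r^j) = (r^2 - r^Suc N) / (1 - r)"
    using False assms by (subst sum_gp) auto
  also have "\<dots> \<le> r^2 / (1 - r)" using assms by (intro divide_right_mono) auto
  also have "\<dots> \<le> r^2 / (1/2)" using assms by (intro divide_left_mono) auto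
  also have "\<dots> = 2 * r^2" by simp
  finally show ?thesis .
qed

definition S1 :: "nat \<Rightarrow> real" where "S1 x = (\<Sum>p\<in>PR x. ln (real p) / real p)"

lemma mertens_upper:
  assumes "x \<ge> 1"
  shows "S1 x \<le> ln (real x) + 4 * ln 2"
proof -
  have "real x * S1 x - theta x = (\<Sum>p\<in>PR x. ln (real p) * (real x / real p - 1))"
    unfolding S1_def theta_def by (simp add: sum_distrib_left sum_subtractf[symmetric] field_simps)
  also have "\<dots> \<le> (\<Sum>p\<in>PR x. ln (real p) * real (x div p^1))"
  proof (rule sum_mono)
    fix p assume p: "p \<in> PR x"
    hence "p > 0" by (auto simp: PR_def prime_gt_0_nat)
    thus "ln (real p) * (real x / real p - 1) \<le> ln (real p) * real (x div p^1)"
      using real_div_ge[of p x] ln_prime_nonneg[OF p] by (intro mult_left_mono) auto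
  qed
  also have "\<dots> \<le> (\<Sum>p\<in>PR x. \<Sum>j\<in>{1..x}. ln (real p) * real (x div p^j))"
    using assms by (intro sum_mono member_le_sum) (auto intro!: mult_nonneg_nonneg ln_prime_nonneg)
  also have "\<dots> = ln (fact x)" by (rule ln_fact_sum[symmetric]) simp
  also have "\<dots> \<le> real x * ln (real x)" by (rule ln_fact_le)
  finally have "real x * S1 x \<le> real x * ln (real x) + 4 * ln 2 * real x"
    using theta_bound[of x] by linarith
  hence "real x * S1 x \<le> real x * (ln (real x) + 4 * ln 2)" by (simp add: algebra_simps)
  thus ?thesis using assms by (subst (asm) mult_le_cancel_left_pos) auto
qed

lemma mertens_lower:
  assumes "x \<ge> 1"
  shows "S1 x \<ge> ln (real x) - 1 - 4 * G2"
proof -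
  have "real x * ln (real x) - real x \<le> ln (fact x)" by (rule ln_fact_ge)
  also have "\<dots> = (\<Sum>p\<in>PR x. \<Sum>j\<in>{1..x}. ln (real p) * real (x div p^j))" by (rule ln_fact_sum) simp
  also have "\<dots> \<le> (\<Sum>p\<in>PR x. ln (real p) * (real x / real p + real x * (2 / (real p)^2)))"
  proof (rule sum_mono)
    fix p assume p: "p \<in> PR x"
    hence p2: "p \<ge> 2" by (auto simp: PR_def prime_ge_2_nat)
    have "(\<Sum>j\<in>{1..x}. real (x div p^j)) \<le> (\<Sum>j\<in>{1..x}. real x * (1 / real p)^j)"
    proof (intro sum_mono)
      fix j show "real (x div p^j) \<le> real x * (1 / real p)^j"
        using real_div_le[of x "p^j"] by (simp add: power_divide)
    qed
    also have "\<dots> = real x * (1 / real p) + real x * (\<Sum>j\<in>{2..x}. (1 / real p)^j)"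
    proof -
      have "{1..x} = insert 1 {2..x}" using assms by auto
      thus ?thesis by (simp add: sum_distrib_left)
    qed
    also have "\<dots> \<le> real x * (1 / real p) + real x * (2 * (1 / real p)^2)"
      using p2 by (intro add_left_mono mult_left_mono geom2) auto
    finally have "(\<Sum>j\<in>{1..x}. real (x div p^j)) \<le> real x / real p + real x * (2 / (real p)^2)"
      by (simp add: power_divide)
    thus "(\<Sum>j\<in>{1..x}. ln (real p) * real (x div p^j)) \<le> ln (real p) * (real x / real p + real x * (2 / (real p)^2))"
      using ln_prime_nonneg[OF p] by (simp add: sum_distrib_left[symmetric] mult_left_mono)
  qed
  also have "\<dots> = real x * S1 x + 2 * real x * (\<Sum>p\<in>PR x. ln (real p) / (real p)^2)"
    unfolding S1_def by (simp add: sum_distrib_left sum.distrib algebra_simps)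
  also have "\<dots> \<le> real x * S1 x + 2 * real x * (2 * G2)"
    using sumPR_lnp_sq[of x] by (intro add_left_mono mult_left_mono) auto
  finally have "real x * (ln (real x) - 1 - 4 * G2) \<le> real x * S1 x" by (simp add: algebra_simps)
  thus ?thesis using assms by (subst (asm) mult_le_cancel_left_pos) auto
qed



definition S2 :: "nat \<Rightarrow> real" where "S2 x = (\<Sum>p\<in>PR x. (ln (real p))^2 / real p)"

lemma PR_Suc: "PR (Suc m) = (if prime (Suc m) then insert (Suc m) (PR m) else PR m)"
  by (auto simp: PR_def le_Suc_eq)

lemma Suc_notin_PR[simp]: "Suc m \<notin> PR m" by (simp add: PR_def)

lemma S1_Suc: "S1 (Suc m) = S1 m + (if prime (Suc m) then ln (real (Suc m)) / real (Suc m) else 0)"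
  unfolding S1_def by (simp add: PR_Suc)

lemma S2_Suc: "S2 (Suc m) = S2 m + (if prime (Suc m) then (ln (real (Suc m)))^2 / real (Suc m) else 0)"
  unfolding S2_def by (simp add: PR_Suc)

lemma S1_0: "S1 0 = 0" by (simp add: S1_def PR_def)

lemma abel:
  "S2 m = ln (real m) * S1 m - (\<Sum>k<m. S1 k * (ln (real (Suc k)) - ln (real k)))"
proof (induction m)
  case 0 thus ?case by (simp add: S2_def PR_def)
next
  case (Suc m)
  show ?case using Suc.IH
    by (simp add: S2_Suc S1_Suc power2_eq_square algebra_simps del: of_nat_Suc)
qed

definition TT :: "nat \<Rightarrow> real" where "TT m = (\<Sum>k<m. ln (real k) * (ln (real (Suc k)) - ln (real k)))"

lemma TT_upper: "TT m \<le> (ln (real m))^2 / 2"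
proof (induction m)
  case 0 thus ?case by (simp add: TT_def)
next
  case (Suc m)
  have "TT (Suc m) = TT m + ln (real m) * (ln (real (Suc m)) - ln (real m))"
    by (simp add: TT_def)
  also have "\<dots> \<le> (ln (real m))^2 / 2 + ln (real m) * (ln (real (Suc m)) - ln (real m))"
    using Suc.IH by simp
  also have "\<dots> = (ln (real (Suc m)))^2 / 2 - (ln (real (Suc m)) - ln (real m))^2 / 2"
    by (simp add: power2_eq_square field_simps)
  also have "\<dots> \<le> (ln (real (Suc m)))^2 / 2" by simp
  finally show ?case .
qed

lemma TT_lower: "TT (Suc m) \<ge> (ln (real (Suc m)))^2 / 2 - 1 + 1 / real (Suc m)"
proof (induction m)
  case 0 thus ?case by (simp add: TT_def)
next
  case (Suc m)
  define a where "a = ln (real (Suc (Suc m))) - ln (real (Suc m))"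
  have a0: "a \<ge> 0" unfolding a_def by simp
  have "ln (real (Suc (Suc m)) / real (Suc m)) \<le> real (Suc (Suc m)) / real (Suc m) - 1"
    by (intro ln_le_minus_one) auto
  hence a1: "a \<le> 1 / real (Suc m)" unfolding a_def by (simp add: ln_div field_simps del: of_nat_Suc)
  have "a^2 \<le> (1 / real (Suc m))^2" using a0 a1 by (intro power_mono) auto
  also have "\<dots> \<le> 2 * (1 / real (Suc m) - 1 / real (Suc (Suc m)))"
    by (simp add: field_simps power2_eq_square del: of_nat_Suc) (simp add: algebra_simps)
  finally have a2: "a^2 / 2 \<le> 1 / real (Suc m) - 1 / real (Suc (Suc m))" by simp
  have "TT (Suc (Suc m)) = TT (Suc m) + ln (real (Suc m)) * a"
    by (simp add: TT_def a_def del: of_nat_Suc)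
  also have "ln (real (Suc m)) * a = (ln (real (Suc (Suc m))))^2 / 2 - (ln (real (Suc m)))^2 / 2 - a^2 / 2"
    unfolding a_def by (simp add: power2_eq_square field_simps)
  finally show ?case using Suc.IH a2 by linarith
qed

definition BB :: real where "BB = 1 + 4 * G2 + 4 * ln 2"

lemma BB_pos: "BB > 0" unfolding BB_def using G2_nonneg ln2_ge_half by simp

lemma S1_err: "\<bar>S1 k - ln (real k)\<bar> \<le> BB"
proof (cases "k = 0")
  case True thus ?thesis using BB_pos by (simp add: S1_0)
next
  case False
  thus ?thesis using mertens_upper[of k] mertens_lower[of k] G2_nonneg ln2_ge_half unfolding BB_def
    by (auto simp: abs_le_iff)
qed

lemma S2_asymp:
  assumes "m \<ge> 1"
  shows "\<bar>S2 m - (ln (real m))^2 / 2\<bar> \<le> 2 * BB * ln (real m) + 1"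
proof -
  define R where "R = (\<Sum>k<m. (S1 k - ln (real k)) * (ln (real (Suc k)) - ln (real k)))"
  have tel: "(\<Sum>k<m. (ln (real (Suc k)) - ln (real k))) = ln (real m)"
    by (subst sum_lessThan_telescope) simp
  have "\<bar>R\<bar> \<le> (\<Sum>k<m. \<bar>(S1 k - ln (real k)) * (ln (real (Suc k)) - ln (real k))\<bar>)"
    unfolding R_def by (rule sum_abs)
  also have "\<dots> \<le> (\<Sum>k<m. BB * (ln (real (Suc k)) - ln (real k)))"
  proof (rule sum_mono)
    fix k
    have d: "ln (real (Suc k)) - ln (real k) \<ge> 0" by (cases "k = 0") auto
    show "\<bar>(S1 k - ln (real k)) * (ln (real (Suc k)) - ln (real k))\<bar> \<le> BB * (ln (real (Suc k)) - ln (real k))"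
      using S1_err[of k] d by (simp add: abs_mult mult_right_mono)
  qed
  also have "\<dots> = BB * ln (real m)" using tel by (simp add: sum_distrib_left[symmetric])
  finally have Rb: "\<bar>R\<bar> \<le> BB * ln (real m)" .
  have "(\<Sum>k<m. S1 k * (ln (real (Suc k)) - ln (real k))) = TT m + R"
    unfolding TT_def R_def by (simp add: sum.distrib[symmetric] algebra_simps)
  hence "S2 m = ln (real m) * S1 m - TT m - R" by (simp add: abel[of m])
  moreover have "\<bar>ln (real m) * (S1 m - ln (real m))\<bar> \<le> ln (real m) * BB"
    using S1_err[of m] assms by (simp add: abs_mult mult_left_mono)
  moreover have "TT m \<ge> (ln (real m))^2 / 2 - 1" "TT m \<le> (ln (real m))^2 / 2"
  proof -
    have "1 / real m \<ge> 0" by simp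
    moreover have "TT m \<ge> (ln (real m))^2 / 2 - 1 + 1 / real m" using TT_lower[of "m - 1"] assms by simp
    ultimately show "TT m \<ge> (ln (real m))^2 / 2 - 1" by linarith
  qed (rule TT_upper)
  ultimately show ?thesis using Rb
    by (simp add: power2_eq_square algebra_simps abs_le_iff)
qed



definition EE :: "nat \<Rightarrow> (nat \<Rightarrow> real) \<Rightarrow> real" where
  "EE n f = (\<Sum>k\<in>{1..n}. f k) / real n"

definition VV :: "nat \<Rightarrow> (nat \<Rightarrow> real) \<Rightarrow> real" where
  "VV n f = EE n (\<lambda>k. (f k - EE n f)^2)"

lemma variance_eq_Va:
  assumes "n \<ge> 1"
  shows "measure_pmf.variance (pmf_of_set {1..n}) f = VV n f"
proof -
  have ne: "{1..n} \<noteq> {}" using assms by simp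
  show ?thesis unfolding VV_def EE_def
    using assms by (subst integral_pmf_of_set, simp_all)+
qed

lemma EE_diff: "EE n (\<lambda>k. f k - g k) = EE n f - EE n g"
  unfolding EE_def by (simp add: sum_subtractf diff_divide_distrib)

lemma EE_add: "EE n (\<lambda>k. f k + g k) = EE n f + EE n g"
  unfolding EE_def by (simp add: sum.distrib add_divide_distrib)

lemma EE_cmult: "EE n (\<lambda>k. c * f k) = c * EE n f"
  unfolding EE_def by (simp add: sum_distrib_left[symmetric])

lemma EE_const: "n \<ge> 1 \<Longrightarrow> EE n (\<lambda>k. c) = c"
  unfolding EE_def by simp

lemma EE_mono: "(\<And>k. k \<in> {1..n} \<Longrightarrow> f k \<le> g k) \<Longrightarrow> EE n f \<le> EE n g"
  unfolding EE_def by (intro divide_right_mono sum_mono) auto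

lemma EE_cong: "(\<And>k. k \<in> {1..n} \<Longrightarrow> f k = g k) \<Longrightarrow> EE n f = EE n g"
proof -
  assume a: "\<And>k. k \<in> {1..n} \<Longrightarrow> f k = g k"
  have "sum f {1..n} = sum g {1..n}" by (rule sum.cong) (use a in auto)
  thus ?thesis unfolding EE_def by simp
qed

lemma EE_sum: "EE n (\<lambda>k. \<Sum>a\<in>I. f a k) = (\<Sum>a\<in>I. EE n (f a))"
  unfolding EE_def by (subst sum.swap) (simp add: sum_divide_distrib)

lemma EE_nonneg: "(\<And>k. k \<in> {1..n} \<Longrightarrow> f k \<ge> 0) \<Longrightarrow> EE n f \<ge> 0"
  unfolding EE_def by (intro divide_nonneg_nonneg sum_nonneg) auto

lemma VV_le:
  assumes "n \<ge> 1"
  shows "VV n f \<le> EE n (\<lambda>k. (f k - c)^2)"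
proof -
  have "EE n (\<lambda>k. (f k - c)^2) = EE n (\<lambda>k. (f k - EE n f)^2 + 2 * (EE n f - c) * (f k - EE n f) + (EE n f - c)^2)"
    by (intro EE_cong) (simp add: power2_eq_square algebra_simps)
  also have "\<dots> = VV n f + 2 * (EE n f - c) * (EE n f - EE n f) + (EE n f - c)^2"
    unfolding VV_def using assms by (simp add: EE_add EE_cmult EE_diff EE_const)
  finally show ?thesis by simp
qed

lemma VV_alt:
  assumes "n \<ge> 1"
  shows "VV n f = EE n (\<lambda>k. (f k)^2) - (EE n f)^2"
proof -
  have "VV n f = EE n (\<lambda>k. (f k)^2 + (-2 * EE n f) * f k + (EE n f)^2)"
    unfolding VV_def by (intro EE_cong) (simp add: power2_eq_square algebra_simps)
  also have "\<dots> = EE n (\<lambda>k. (f k)^2 + (-2 * EE n f) * f k) + EE n (\<lambda>k. (EE n f)^2)"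
    by (rule EE_add)
  also have "EE n (\<lambda>k. (f k)^2 + (-2 * EE n f) * f k) = EE n (\<lambda>k. (f k)^2) + EE n (\<lambda>k. (-2 * EE n f) * f k)"
    by (rule EE_add)
  also have "EE n (\<lambda>k. (-2 * EE n f) * f k) = (-2 * EE n f) * EE n f" by (rule EE_cmult)
  also have "EE n (\<lambda>k. (EE n f)^2) = (EE n f)^2" by (rule EE_const[OF assms])
  finally show ?thesis by (simp add: power2_eq_square)
qed

lemma VV_nonneg: "VV n f \<ge> 0"
  unfolding VV_def by (intro EE_nonneg) simp

lemma sd_L2:
  assumes "n \<ge> 1"
  shows "sqrt (VV n f) = L2_set (\<lambda>k. f k - EE n f) {1..n} / sqrt (real n)"
proof -
  have "VV n f = (\<Sum>k\<in>{1..n}. (f k - EE n f)^2) / real n"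
    unfolding VV_def EE_def[of n "\<lambda>k. (f k - EE n f)^2"] ..
  thus ?thesis by (simp add: L2_set_def real_sqrt_divide)
qed

lemma sd_triangle:
  assumes "n \<ge> 1"
  shows "sqrt (VV n (\<lambda>k. f k - g k)) \<le> sqrt (VV n f) + sqrt (VV n g)"
proof -
  have "L2_set (\<lambda>k. (f k - g k) - EE n (\<lambda>k. f k - g k)) {1..n}
      = L2_set (\<lambda>k. (f k - EE n f) + (- (g k - EE n g))) {1..n}"
    by (simp add: EE_diff algebra_simps)
  also have "\<dots> \<le> L2_set (\<lambda>k. f k - EE n f) {1..n} + L2_set (\<lambda>k. - (g k - EE n g)) {1..n}"
    by (rule L2_set_triangle_ineq)
  also have "L2_set (\<lambda>k. - (g k - EE n g)) {1..n} = L2_set (\<lambda>k. g k - EE n g) {1..n}"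
    unfolding L2_set_def by (simp add: power2_commute)
  finally show ?thesis using assms
    by (simp add: sd_L2 add_divide_distrib[symmetric] divide_right_mono)
qed

lemma VV_uminus: "VV n (\<lambda>k. - g k) = VV n g"
proof -
  have "EE n (\<lambda>k. - g k) = - EE n g" using EE_cmult[of n "-1" g] by simp
  thus ?thesis unfolding VV_def by (simp add: power2_eq_square algebra_simps)
qed

lemma sd_close:
  assumes "n \<ge> 1"
  shows "\<bar>sqrt (VV n (\<lambda>k. f k - g k)) - sqrt (VV n f)\<bar> \<le> sqrt (VV n g)"
proof -
  have "sqrt (VV n (\<lambda>k. (f k - g k) - (- g k))) \<le> sqrt (VV n (\<lambda>k. f k - g k)) + sqrt (VV n (\<lambda>k. - g k))"
    by (rule sd_triangle[OF assms])
  hence "sqrt (VV n f) \<le> sqrt (VV n (\<lambda>k. f k - g k)) + sqrt (VV n g)" by (simp add: VV_uminus)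
  thus ?thesis using sd_triangle[OF assms, of f g] by linarith
qed



abbreviation ind :: "bool \<Rightarrow> real" where "ind b \<equiv> (if b then 1 else 0)"

definition Af :: "nat \<Rightarrow> nat \<Rightarrow> real" where
  "Af m k = (\<Sum>p\<in>PR m. ln (real p) * ind (p dvd k))"

definition Xf :: "nat \<Rightarrow> nat \<Rightarrow> nat \<Rightarrow> real" where
  "Xf n m k = (\<Sum>p\<in>{p. prime p \<and> m < p \<and> p \<le> n}. ln (real p) * ind (p dvd k))"

definition Df :: "nat \<Rightarrow> nat \<Rightarrow> real" where
  "Df n k = (\<Sum>p\<in>PR n. \<Sum>j\<in>{2..n}. ln (real p) * ind (p^j dvd k))"

lemma ln_Utilde:
  assumes "k \<ge> 1"
  shows "ln (real (Utilde n m k)) = Xf n m k"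
proof -
  let ?Q = "{p. prime p \<and> m < p \<and> p \<le> n}"
  have fin: "finite ?Q" by (rule finite_subset[of _ "{..n}"]) auto
  have mult: "(1 \<le> multiplicity p k) = (p dvd k)" if "prime p" for p
  proof -
    have "k \<noteq> 0" "\<not> is_unit p" using assms that by auto
    from power_dvd_iff_le_multiplicity[OF this, of 1] show ?thesis by simp
  qed
  have "ln (real (Utilde n m k)) = ln (\<Prod>p\<in>?Q. real p ^ (if 1 \<le> multiplicity p k then 1 else 0))"
    unfolding Utilde_def by simp
  also have "\<dots> = (\<Sum>p\<in>?Q. ln (real p ^ (if 1 \<le> multiplicity p k then 1 else 0)))"
    using fin by (subst ln_prod) (auto simp: prime_gt_0_nat)
  also have "\<dots> = Xf n m k"
    unfolding Xf_def using mult by (intro sum.cong) auto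
  finally show ?thesis .
qed

lemma decomp:
  assumes "1 \<le> k" "k \<le> n" "m \<le> n"
  shows "ln (real k) = Af m k + Xf n m k + Df n k"
proof -
  let ?Q = "{p. prime p \<and> m < p \<and> p \<le> n}"
  have n1: "n \<ge> 1" using assms by simp
  have "ln (real k) = (\<Sum>p\<in>PR n. \<Sum>j\<in>{1..n}. ln (real p) * ind (p^j dvd k))"
    by (rule ln_as_sum) (use assms in auto)
  also have "\<dots> = (\<Sum>p\<in>PR n. ln (real p) * ind (p dvd k) + (\<Sum>j\<in>{2..n}. ln (real p) * ind (p^j dvd k)))"
  proof (rule sum.cong[OF refl])
    fix p
    have "{1..n} = insert 1 {2..n}" using n1 by auto
    thus "(\<Sum>j\<in>{1..n}. ln (real p) * ind (p^j dvd k)) = ln (real p) * ind (p dvd k) + (\<Sum>j\<in>{2..n}. ln (real p) * ind (p^j dvd k))"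
      by simp
  qed
  also have "\<dots> = (\<Sum>p\<in>PR n. ln (real p) * ind (p dvd k)) + Df n k"
    unfolding Df_def by (rule sum.distrib)
  also have "(\<Sum>p\<in>PR n. ln (real p) * ind (p dvd k)) = Af m k + Xf n m k"
  proof -
    have "PR n = PR m \<union> ?Q" "PR m \<inter> ?Q = {}" using assms by (auto simp: PR_def)
    moreover have "finite ?Q" by (rule finite_subset[of _ "{..n}"]) auto
    ultimately show ?thesis unfolding Af_def Xf_def by (simp add: sum.union_disjoint)
  qed
  finally show ?thesis .
qed

lemma ln_sq_le_sqrt:
  assumes "y \<ge> (1::real)"
  shows "(ln y)^2 \<le> 16 * sqrt y"
proof -
  have y0: "y > 0" using assms by simp
  have "ln (sqrt (sqrt y)) = ln y / 4" using y0 by (simp add: ln_sqrt)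
  moreover have "ln (sqrt (sqrt y)) \<le> sqrt (sqrt y) - 1" using y0 by (intro ln_le_minus_one) auto
  ultimately have "ln y \<le> 4 * sqrt (sqrt y)" by simp
  moreover have "ln y \<ge> 0" using assms by simp
  ultimately have "(ln y)^2 \<le> (4 * sqrt (sqrt y))^2" by (intro power_mono) auto
  also have "\<dots> = 16 * sqrt y" using y0 by (simp add: power_mult_distrib)
  finally show ?thesis .
qed

lemma sum_inv_sqrt: "(\<Sum>k\<in>{1..n}. 1 / sqrt (real k)) \<le> 2 * sqrt (real n)"
proof (induction n)
  case 0 thus ?case by simp
next
  case (Suc n)
  define x where "x = sqrt (real n)"
  define y where "y = sqrt (real (Suc n))"
  have x0: "x \<ge> 0" and y0: "y > 0" unfolding x_def y_def by auto
  have yx: "y^2 = x^2 + 1" unfolding x_def y_def by simp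
  have "2 * x * y \<le> x^2 + y^2" by (simp add: sum_squares_bound)
  hence "2 * x * y + 1 \<le> 2 * y^2" using yx by simp
  moreover have "(2 * x + 1 / y) * y = 2 * x * y + 1" using y0 by (simp add: field_simps)
  moreover have "(2 * y) * y = 2 * y^2" by (simp add: power2_eq_square)
  ultimately have "(2 * x + 1 / y) * y \<le> (2 * y) * y" by simp
  hence key: "2 * x + 1 / y \<le> 2 * y" using y0 by (simp add: mult_le_cancel_right)
  have "(\<Sum>k\<in>{1..Suc n}. 1 / sqrt (real k)) = (\<Sum>k\<in>{1..n}. 1 / sqrt (real k)) + 1 / y"
    unfolding y_def by simp
  also have "\<dots> \<le> 2 * x + 1 / y" using Suc.IH unfolding x_def by simp
  also have "\<dots> \<le> 2 * y" by (rule key)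
  finally show ?case unfolding y_def .
qed

lemma L_part:
  assumes "n \<ge> 1"
  shows "EE n (\<lambda>k. (ln (real k) - ln (real n))^2) \<le> 32"
proof -
  have "EE n (\<lambda>k. (ln (real k) - ln (real n))^2) \<le> EE n (\<lambda>k. 16 * sqrt (real n) * (1 / sqrt (real k)))"
  proof (rule EE_mono)
    fix k assume k: "k \<in> {1..n}"
    have "(ln (real k) - ln (real n))^2 = (ln (real n / real k))^2"
      using k by (simp add: ln_div power2_commute)
    also have "\<dots> \<le> 16 * sqrt (real n / real k)" using k by (intro ln_sq_le_sqrt) auto
    finally show "(ln (real k) - ln (real n))^2 \<le> 16 * sqrt (real n) * (1 / sqrt (real k))"
      by (simp add: real_sqrt_divide)
  qed
  also have "\<dots> = 16 * sqrt (real n) * (\<Sum>k\<in>{1..n}. 1 / sqrt (real k)) / real n"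
    unfolding EE_def by (simp add: sum_distrib_left)
  also have "\<dots> \<le> 16 * sqrt (real n) * (2 * sqrt (real n)) / real n"
    by (intro divide_right_mono mult_left_mono sum_inv_sqrt) auto
  also have "\<dots> = 32" using assms by simp
  finally show ?thesis .
qed



lemma geom_gen:
  assumes "0 \<le> r" "r < (1::real)"
  shows "(\<Sum>j\<in>{2..N}. r^j) \<le> r^2 / (1 - r)"
proof (cases "N < 2")
  case True thus ?thesis using assms by simp
next
  case False
  have "(\<Sum>j\<in>{2..N}. r^j) = (r^2 - r^Suc N) / (1 - r)"
    using False assms by (subst sum_gp) auto
  also have "\<dots> \<le> r^2 / (1 - r)" using assms by (intro divide_right_mono) auto
  finally show ?thesis .
qed

lemma EE_ind: "(d::nat) > 0 \<Longrightarrow> EE n (\<lambda>k. ind (d dvd k)) = real (n div d) / real n"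
  unfolding EE_def using sum_indicator_dvd by simp

lemma EE_ind_le: "(d::nat) > 0 \<Longrightarrow> EE n (\<lambda>k. ind (d dvd k)) \<le> 1 / real d"
proof -
  assume d: "d > 0"
  have "real (n div d) / real n \<le> (real n / real d) / real n"
    by (intro divide_right_mono real_div_le) auto
  also have "\<dots> \<le> 1 / real d" by (cases "n = 0") auto
  finally show ?thesis using EE_ind[OF d] by simp
qed

lemma pair_bound:
  assumes "prime p" "prime q"
  shows "EE n (\<lambda>k. ind (p^j dvd k) * ind (q^i dvd k)) \<le>
           (1/real p)^j * (1/real q)^i + (if q = p then (1/sqrt (real p))^j * (1/sqrt (real p))^i else 0)"
proof (cases "q = p")
  case False
  have cop: "coprime (p^j) (q^i)" using primes_coprime[OF assms] False by auto
  have "EE n (\<lambda>k. ind (p^j dvd k) * ind (q^i dvd k)) = EE n (\<lambda>k. ind (p^j * q^i dvd k))"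
  proof (rule EE_cong)
    fix k
    have "(p^j dvd k \<and> q^i dvd k) = (p^j * q^i dvd k)"
      using cop by (auto intro: divides_mult dvd_mult_left dvd_mult_right)
    thus "ind (p^j dvd k) * ind (q^i dvd k) = ind (p^j * q^i dvd k)" by auto
  qed
  also have "\<dots> \<le> 1 / real (p^j * q^i)"
    using assms by (intro EE_ind_le) (auto simp: prime_gt_0_nat)
  also have "\<dots> = (1/real p)^j * (1/real q)^i" by (simp add: power_divide)
  finally show ?thesis using False by simp
next
  case True
  define v where "v = EE n (\<lambda>k. ind (p^j dvd k) * ind (p^i dvd k))"
  have p0: "p > 0" using assms by (simp add: prime_gt_0_nat)
  have v0: "v \<ge> 0" unfolding v_def by (intro EE_nonneg) auto
  have "v \<le> EE n (\<lambda>k. ind (p^j dvd k))" unfolding v_def by (intro EE_mono) auto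
  also have "\<dots> \<le> 1 / real (p^j)" using p0 by (intro EE_ind_le) auto
  finally have va: "v \<le> (1/real p)^j" by (simp add: power_divide)
  have "v \<le> EE n (\<lambda>k. ind (p^i dvd k))" unfolding v_def by (intro EE_mono) auto
  also have "\<dots> \<le> 1 / real (p^i)" using p0 by (intro EE_ind_le) auto
  finally have vb: "v \<le> (1/real p)^i" by (simp add: power_divide)
  have "v * v \<le> (1/real p)^j * (1/real p)^i" using va vb v0 by (intro mult_mono) auto
  hence "v \<le> sqrt ((1/real p)^j * (1/real p)^i)" using v0 by (intro real_le_rsqrt) (simp add: power2_eq_square)
  also have "\<dots> = (1/sqrt (real p))^j * (1/sqrt (real p))^i"
    by (simp add: real_sqrt_mult real_sqrt_power real_sqrt_divide)
  finally show ?thesis using True unfolding v_def by (simp add: add_increasing)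
qed

lemma D_part:
  assumes "n \<ge> 1"
  shows "EE n (\<lambda>k. (Df n k)^2) \<le> 16 * G2^2 + 16 * G2"
proof -
  let ?J = "{2..n}"
  define s where "s p = 1 / sqrt (real p)" for p :: nat
  define M where "M = (\<Sum>q\<in>PR n. \<Sum>i\<in>?J. ln (real q) * (1/real q)^i)"
  define c where "c p q j i = (1/real p)^j * (1/real q)^i + (if q = p then s p ^ j * s p ^ i else 0)" for p q j i :: nat
  have sq: "(Df n k)^2 = (\<Sum>p\<in>PR n. \<Sum>q\<in>PR n. \<Sum>j\<in>?J. \<Sum>i\<in>?J.
              ln (real p) * ln (real q) * (ind (p^j dvd k) * ind (q^i dvd k)))" for k
    unfolding Df_def power2_eq_square sum_product by (simp add: algebra_simps)
  have "EE n (\<lambda>k. (Df n k)^2) = (\<Sum>p\<in>PR n. \<Sum>q\<in>PR n. \<Sum>j\<in>?J. \<Sum>i\<in>?J.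
              ln (real p) * ln (real q) * EE n (\<lambda>k. ind (p^j dvd k) * ind (q^i dvd k)))"
    unfolding sq by (simp add: EE_sum EE_cmult)
  also have "\<dots> \<le> (\<Sum>p\<in>PR n. \<Sum>q\<in>PR n. \<Sum>j\<in>?J. \<Sum>i\<in>?J. ln (real p) * ln (real q) * c p q j i)"
    unfolding c_def s_def
    by (intro sum_mono mult_left_mono pair_bound mult_nonneg_nonneg ln_prime_nonneg)
       (auto simp: PR_def)
  also have "\<dots> = (\<Sum>p\<in>PR n. \<Sum>q\<in>PR n. \<Sum>j\<in>?J. \<Sum>i\<in>?J. (ln (real p) * (1/real p)^j) * (ln (real q) * (1/real q)^i))
       + (\<Sum>p\<in>PR n. \<Sum>q\<in>PR n. if q = p then (\<Sum>j\<in>?J. \<Sum>i\<in>?J. ln (real p) * ln (real q) * (s p ^ j * s p ^ i)) else 0)"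
  proof -
    have pt: "ln (real p) * ln (real q) * c p q j i = (ln (real p) * (1/real p)^j) * (ln (real q) * (1/real q)^i)
       + (if q = p then ln (real p) * ln (real q) * (s p ^ j * s p ^ i) else 0)" for p q j i
      by (simp add: c_def algebra_simps)
    have ifs: "(\<Sum>j\<in>?J. \<Sum>i\<in>?J. if q = p then ln (real p) * ln (real q) * (s p ^ j * s p ^ i) else 0)
       = (if q = p then (\<Sum>j\<in>?J. \<Sum>i\<in>?J. ln (real p) * ln (real q) * (s p ^ j * s p ^ i)) else 0)" for p q
      by (cases "q = p") simp_all
    show ?thesis by (simp only: pt sum.distrib ifs)
  qed
  also have "(\<Sum>p\<in>PR n. \<Sum>q\<in>PR n. \<Sum>j\<in>?J. \<Sum>i\<in>?J. (ln (real p) * (1/real p)^j) * (ln (real q) * (1/real q)^i)) = M * M"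
    unfolding M_def sum_product by (simp add: sum.swap[of _ "PR n" ?J])
  also have "(\<Sum>p\<in>PR n. \<Sum>q\<in>PR n. if q = p then (\<Sum>j\<in>?J. \<Sum>i\<in>?J. ln (real p) * ln (real q) * (s p ^ j * s p ^ i)) else 0)
       = (\<Sum>p\<in>PR n. (ln (real p))^2 * (\<Sum>j\<in>?J. s p ^ j)^2)"
    by (simp add: power2_eq_square sum_product algebra_simps sum_distrib_left)
  also have "M * M \<le> (4 * G2) * (4 * G2)"
  proof -
    have "M \<le> (\<Sum>q\<in>PR n. ln (real q) * (2 * (1/real q)^2))"
      unfolding M_def
    proof (rule sum_mono)
      fix q assume q: "q \<in> PR n"
      hence "q \<ge> 2" by (auto simp: PR_def prime_ge_2_nat)
      hence "(\<Sum>i\<in>?J. (1/real q)^i) \<le> 2 * (1/real q)^2" by (intro geom2) auto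
      thus "(\<Sum>i\<in>?J. ln (real q) * (1/real q)^i) \<le> ln (real q) * (2 * (1/real q)^2)"
        using ln_prime_nonneg[OF q] by (simp add: sum_distrib_left[symmetric] mult_left_mono)
    qed
    also have "\<dots> = 2 * (\<Sum>q\<in>PR n. ln (real q) / (real q)^2)"
      by (simp add: sum_distrib_left power_divide mult.commute)
    also have "\<dots> \<le> 4 * G2" using sumPR_lnp_sq[of n] by simp
    finally have "M \<le> 4 * G2" .
    moreover have "M \<ge> 0" unfolding M_def
      by (intro sum_nonneg mult_nonneg_nonneg ln_prime_nonneg) auto
    ultimately show ?thesis by (intro mult_mono) auto
  qed
  also have "(\<Sum>p\<in>PR n. (ln (real p))^2 * (\<Sum>j\<in>?J. s p ^ j)^2) \<le> (\<Sum>p\<in>PR n. 16 * ((ln (real p))^2 / (real p)^2))"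
  proof (rule sum_mono)
    fix p assume p: "p \<in> PR n"
    hence p2: "real p \<ge> 2" by (auto simp: PR_def prime_ge_2_nat)
    have "sqrt (real p) \<ge> sqrt 2" using p2 by simp
    moreover have "sqrt 2 \<ge> (4/3::real)" by (rule real_le_rsqrt) (simp add: power2_eq_square)
    ultimately have sp: "sqrt (real p) \<ge> 4/3" by linarith
    have s0: "s p \<ge> 0" unfolding s_def by simp
    have "1 / sqrt (real p) \<le> 1 / (4/3)" using sp p2 by (intro divide_left_mono) auto
    hence s1: "s p \<le> 3/4" unfolding s_def by simp
    have "(\<Sum>j\<in>?J. s p ^ j) \<le> (s p)^2 / (1 - s p)" using s0 s1 by (intro geom_gen) auto
    also have "\<dots> \<le> (s p)^2 / (1/4)" using s0 s1 by (intro divide_left_mono) auto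
    also have "(s p)^2 = 1 / real p" unfolding s_def using p2 by (simp add: power_divide)
    finally have b: "(\<Sum>j\<in>?J. s p ^ j) \<le> 4 / real p" by simp
    have "(\<Sum>j\<in>?J. s p ^ j)^2 \<le> (4 / real p)^2"
      using b s0 by (intro power_mono) (auto intro: sum_nonneg)
    thus "(ln (real p))^2 * (\<Sum>j\<in>?J. s p ^ j)^2 \<le> 16 * ((ln (real p))^2 / (real p)^2)"
      using mult_left_mono[of "(\<Sum>j\<in>?J. s p ^ j)^2" "(4 / real p)^2" "(ln (real p))^2"]
      by (simp add: power_divide mult.commute)
  qed
  also have "(\<Sum>p\<in>PR n. 16 * ((ln (real p))^2 / (real p)^2)) \<le> 16 * G2"
    by (subst sum_distrib_left[symmetric]) (simp add: sum_le_G2)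
  finally show ?thesis by (simp add: power2_eq_square)
qed



lemma a_bounds:
  assumes "prime p" "n \<ge> 1"
  shows "EE n (\<lambda>k. ind (p dvd k)) \<ge> 1 / real p - 1 / real n"
        "EE n (\<lambda>k. ind (p dvd k)) \<le> 1 / real p"
proof -
  have p0: "p > 0" using assms by (simp add: prime_gt_0_nat)
  have "real (n div p) / real n \<ge> (real n / real p - 1) / real n"
    using real_div_ge[OF p0, of n] by (intro divide_right_mono) auto
  also have "(real n / real p - 1) / real n = 1 / real p - 1 / real n" using assms by (simp add: field_simps)
  finally show "EE n (\<lambda>k. ind (p dvd k)) \<ge> 1 / real p - 1 / real n" using EE_ind[OF p0] by simp
  show "EE n (\<lambda>k. ind (p dvd k)) \<le> 1 / real p" using EE_ind_le[OF p0] by simp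
qed

lemma term_bound:
  assumes "prime p" "prime q" "p \<le> n" "q \<le> n" "n \<ge> 1"
  shows "\<bar>EE n (\<lambda>k. ind (p dvd k) * ind (q dvd k)) - EE n (\<lambda>k. ind (p dvd k)) * EE n (\<lambda>k. ind (q dvd k))
            - (if q = p then 1 / real p else 0)\<bar> \<le> 1 / real n + (if q = p then 1 / (real p)^2 else 0)"
proof -
  define ap where "ap = EE n (\<lambda>k. ind (p dvd k))"
  define aq where "aq = EE n (\<lambda>k. ind (q dvd k))"
  define x where "x = 1 / real p"
  define y where "y = 1 / real q"
  define t where "t = 1 / real n"
  have p2: "real p \<ge> 2" and q2: "real q \<ge> 2" using assms by (auto simp: prime_ge_2_nat)
  have x: "0 \<le> x" "x \<le> 1/2" unfolding x_def using p2 by (auto simp: field_simps)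
  have y: "0 \<le> y" "y \<le> 1/2" unfolding y_def using q2 by (auto simp: field_simps)
  have t0: "t \<ge> 0" unfolding t_def by simp
  have tx: "t \<le> x" unfolding t_def x_def using assms p2 by (intro divide_left_mono) auto
  have ty: "t \<le> y" unfolding t_def y_def using assms q2 by (intro divide_left_mono) auto
  have ap: "x - t \<le> ap" "ap \<le> x" unfolding ap_def x_def t_def using a_bounds[OF assms(1,5)] by auto
  have aq: "y - t \<le> aq" "aq \<le> y" unfolding aq_def y_def t_def using a_bounds[OF assms(2,5)] by auto
  show ?thesis
  proof (cases "q = p")
    case True
    have e: "EE n (\<lambda>k. ind (p dvd k) * ind (q dvd k)) = ap"
      unfolding ap_def using True by (intro EE_cong) auto
    have "ap * ap \<le> x * x" using ap x tx by (intro mult_mono) auto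
    moreover have "ap * ap \<ge> 0" using ap tx by simp
    ultimately have "\<bar>ap - ap * ap - x\<bar> \<le> t + x * x" using ap t0
      unfolding abs_le_iff by (intro conjI) linarith+
    moreover have "1 / (real p)^2 = x * x" by (simp add: x_def power2_eq_square)
    ultimately show ?thesis using True e unfolding ap_def t_def x_def by simp
  next
    case False
    have cop: "coprime p q" using primes_coprime[OF assms(1,2)] False by auto
    have e: "EE n (\<lambda>k. ind (p dvd k) * ind (q dvd k)) = EE n (\<lambda>k. ind (p * q dvd k))"
    proof (rule EE_cong)
      fix k
      have "(p dvd k \<and> q dvd k) = (p * q dvd k)"
        using cop by (auto intro: divides_mult dvd_mult_left dvd_mult_right)
      thus "ind (p dvd k) * ind (q dvd k) = ind (p * q dvd k)" by auto
    qed
    have pq0: "p * q > 0" using assms by (simp add: prime_gt_0_nat)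
    have "EE n (\<lambda>k. ind (p * q dvd k)) = real (n div (p*q)) / real n" by (rule EE_ind[OF pq0])
    have e1: "EE n (\<lambda>k. ind (p * q dvd k)) \<le> x * y"
      using EE_ind_le[OF pq0, of n] unfolding x_def y_def by simp
    have "real (n div (p*q)) / real n \<ge> (real n / real (p*q) - 1) / real n"
      using real_div_ge[OF pq0, of n] by (intro divide_right_mono) auto
    also have "(real n / real (p*q) - 1) / real n = x * y - t"
      unfolding x_def y_def t_def using assms by (simp add: field_simps)
    finally have e2: "EE n (\<lambda>k. ind (p * q dvd k)) \<ge> x * y - t" using EE_ind[OF pq0] by simp
    have u: "ap * aq \<le> x * y" using ap aq x y t0 tx ty by (intro mult_mono) auto
    have "(x - t) * (y - t) \<le> ap * aq" using ap aq tx ty by (intro mult_mono) auto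
    moreover have "(x - t) * (y - t) = x * y - t * (x + y) + t * t" by (simp add: algebra_simps)
    moreover have "t * (x + y) \<le> t * 1" using x y t0 by (intro mult_left_mono) auto
    moreover have "t * t \<ge> 0" by simp
    ultimately have l: "ap * aq \<ge> x * y - t" by linarith
    show ?thesis using False e e1 e2 u l unfolding ap_def aq_def t_def by (simp add: abs_le_iff) 
  qed
qed

lemma Af_fun: "Af m = (\<lambda>k. \<Sum>p\<in>PR m. ln (real p) * ind (p dvd k))"
  by (rule ext) (simp add: Af_def)

lemma A_part:
  assumes "1 \<le> m" "m * m \<le> n"
  shows "\<bar>VV n (Af m) - S2 m\<bar> \<le> (4 * ln 2)^2 + G2"
proof -
  have mn: "m \<le> n" using assms by (metis le_trans mult_le_mono1 mult_1)
  have n1: "n \<ge> 1" using assms mn by simp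
  define a where "a p = EE n (\<lambda>k. ind (p dvd k))" for p
  define e where "e p q = EE n (\<lambda>k. ind (p dvd k) * ind (q dvd k))" for p q
  define l where "l p = ln (real p)" for p
  have EA: "EE n (Af m) = (\<Sum>p\<in>PR m. l p * a p)"
    unfolding Af_fun a_def l_def by (simp add: EE_sum EE_cmult)
  have EA2: "EE n (\<lambda>k. (Af m k)^2) = (\<Sum>p\<in>PR m. \<Sum>q\<in>PR m. l p * l q * e p q)"
  proof -
    have "(\<lambda>k. (Af m k)^2) = (\<lambda>k. \<Sum>p\<in>PR m. \<Sum>q\<in>PR m. l p * l q * (ind (p dvd k) * ind (q dvd k)))"
      unfolding Af_def power2_eq_square sum_product l_def by (rule ext) (simp add: algebra_simps)
    thus ?thesis unfolding e_def by (simp add: EE_sum EE_cmult)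
  qed
  have VA: "VV n (Af m) = (\<Sum>p\<in>PR m. \<Sum>q\<in>PR m. l p * l q * (e p q - a p * a q))"
  proof -
    have "VV n (Af m) = EE n (\<lambda>k. (Af m k)^2) - (EE n (Af m))^2" by (rule VV_alt[OF n1])
    also have "\<dots> = (\<Sum>p\<in>PR m. \<Sum>q\<in>PR m. l p * l q * e p q) - (\<Sum>p\<in>PR m. l p * a p)^2"
      by (simp only: EA EA2)
    also have "(\<Sum>p\<in>PR m. l p * a p)^2 = (\<Sum>p\<in>PR m. \<Sum>q\<in>PR m. (l p * a p) * (l q * a q))"
      by (simp add: power2_eq_square sum_product)
    finally show ?thesis by (simp add: sum_subtractf[symmetric] algebra_simps)
  qed
  have SS: "S2 m = (\<Sum>p\<in>PR m. \<Sum>q\<in>PR m. l p * l q * (if q = p then 1 / real p else 0))"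
  proof -
    have "(\<Sum>q\<in>PR m. l p * l q * (if q = p then 1 / real p else 0)) = (ln (real p))^2 / real p"
      if "p \<in> PR m" for p
    proof -
      have "(\<Sum>q\<in>PR m. l p * l q * (if q = p then 1 / real p else 0)) = (\<Sum>q\<in>PR m. if q = p then l p * l p / real p else 0)"
        by (rule sum.cong) auto
      also have "\<dots> = l p * l p / real p" using that by (simp add: sum.delta)
      finally show ?thesis by (simp add: l_def power2_eq_square)
    qed
    thus ?thesis unfolding S2_def by (intro sum.cong) auto
  qed
  have "\<bar>VV n (Af m) - S2 m\<bar> = \<bar>\<Sum>p\<in>PR m. \<Sum>q\<in>PR m. l p * l q * (e p q - a p * a q - (if q = p then 1 / real p else 0))\<bar>"
    unfolding VA SS by (simp add: sum_subtractf[symmetric] algebra_simps)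
  also have "\<dots> \<le> (\<Sum>p\<in>PR m. \<Sum>q\<in>PR m. \<bar>l p * l q * (e p q - a p * a q - (if q = p then 1 / real p else 0))\<bar>)"
    by (rule order.trans[OF sum_abs sum_mono]) (rule sum_abs)
  also have "\<dots> \<le> (\<Sum>p\<in>PR m. \<Sum>q\<in>PR m. l p * l q * (1 / real n + (if q = p then 1 / (real p)^2 else 0)))"
  proof (intro sum_mono)
    fix p q assume p: "p \<in> PR m" and q: "q \<in> PR m"
    have lp: "l p \<ge> 0" "l q \<ge> 0" unfolding l_def using p q by (auto intro: ln_prime_nonneg)
    have "\<bar>e p q - a p * a q - (if q = p then 1 / real p else 0)\<bar> \<le> 1 / real n + (if q = p then 1 / (real p)^2 else 0)"
      unfolding e_def a_def using p q mn n1 by (intro term_bound) (auto simp: PR_def)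
    thus "\<bar>l p * l q * (e p q - a p * a q - (if q = p then 1 / real p else 0))\<bar>
          \<le> l p * l q * (1 / real n + (if q = p then 1 / (real p)^2 else 0))"
      using lp by (simp add: abs_mult mult_left_mono)
  qed
  also have "\<dots> = (\<Sum>p\<in>PR m. l p) * (\<Sum>q\<in>PR m. l q) / real n + (\<Sum>p\<in>PR m. (l p)^2 / (real p)^2)"
  proof -
    have pt: "l p * l q * (1 / real n + (if q = p then 1 / (real p)^2 else 0))
       = l p * l q / real n + (if q = p then (l p)^2 / (real p)^2 else 0)" for p q
      by (simp add: power2_eq_square field_simps)
    have d: "(\<Sum>q\<in>PR m. if q = p then (l p)^2 / (real p)^2 else 0) = (l p)^2 / (real p)^2"
      if "p \<in> PR m" for p using that by (simp add: sum.delta)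
    have "(\<Sum>p\<in>PR m. \<Sum>q\<in>PR m. l p * l q * (1 / real n + (if q = p then 1 / (real p)^2 else 0)))
        = (\<Sum>p\<in>PR m. \<Sum>q\<in>PR m. l p * l q / real n) + (\<Sum>p\<in>PR m. \<Sum>q\<in>PR m. if q = p then (l p)^2 / (real p)^2 else 0)"
      by (simp only: pt sum.distrib)
    also have "(\<Sum>p\<in>PR m. \<Sum>q\<in>PR m. if q = p then (l p)^2 / (real p)^2 else 0) = (\<Sum>p\<in>PR m. (l p)^2 / (real p)^2)"
      using d by (intro sum.cong) auto
    also have "(\<Sum>p\<in>PR m. \<Sum>q\<in>PR m. l p * l q / real n) = (\<Sum>p\<in>PR m. l p) * (\<Sum>q\<in>PR m. l q) / real n"
      by (simp add: sum_product sum_divide_distrib)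
    finally show ?thesis .
  qed
  also have "(\<Sum>p\<in>PR m. l p) = theta m" unfolding theta_def l_def ..
  also have "(\<Sum>p\<in>PR m. (l p)^2 / (real p)^2) \<le> G2" unfolding l_def by (rule sum_le_G2) simp
  also have "theta m * theta m / real n \<le> (4 * ln 2)^2"
  proof -
    have "theta m * theta m \<le> (4 * ln 2 * real m) * (4 * ln 2 * real m)"
      using theta_bound[of m] theta_nonneg[of m] by (intro mult_mono) auto
    also have "\<dots> = (4 * ln 2)^2 * real (m * m)" by (simp add: power2_eq_square)
    also have "\<dots> \<le> (4 * ln 2)^2 * real n" using assms by (intro mult_left_mono) (simp_all only: of_nat_le_iff, simp)
    finally show ?thesis using n1 by (simp add: divide_le_eq)
  qed
  finally show ?thesis by simp
qed



lemma VV_cong: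
  assumes "\<And>k. k \<in> {1..n} \<Longrightarrow> f k = g k"
  shows "VV n f = VV n g"
proof -
  have e: "EE n f = EE n g" by (rule EE_cong) (use assms in auto)
  show ?thesis unfolding VV_def e by (rule EE_cong) (use assms in auto)
qed

definition KD :: real where "KD = 16 * G2^2 + 16 * G2"
definition KA :: real where "KA = (4 * ln 2)^2 + G2"
definition K0 :: real where "K0 = sqrt (64 + 2 * KD) + sqrt 2 * (2 * BB + 1 + KA)"

lemma sqrt_close:
  assumes "v \<ge> 0" "t > 0"
  shows "\<bar>sqrt v - t\<bar> \<le> \<bar>v - t^2\<bar> / t"
proof -
  have sv: "sqrt v * sqrt v = v" using assms by simp
  have "v - t^2 = (sqrt v - t) * (sqrt v + t)" using sv by (simp add: power2_eq_square algebra_simps)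
  hence "\<bar>v - t^2\<bar> = \<bar>sqrt v - t\<bar> * \<bar>sqrt v + t\<bar>" by (simp add: abs_mult)
  also have "\<bar>sqrt v + t\<bar> = sqrt v + t" using assms by simp
  finally have eq: "\<bar>v - t^2\<bar> = \<bar>sqrt v - t\<bar> * (sqrt v + t)" .
  have "\<bar>sqrt v - t\<bar> * t \<le> \<bar>sqrt v - t\<bar> * (sqrt v + t)" using assms by (intro mult_left_mono) auto
  hence "\<bar>sqrt v - t\<bar> * t \<le> \<bar>v - t^2\<bar>" using eq by simp
  thus ?thesis using assms by (simp add: le_divide_eq)
qed

lemma main_bound:
  assumes "3 \<le> m" "m * m \<le> n"
  shows "\<bar>sqrt (VV n (Xf n m)) - ln (real m) / sqrt 2\<bar> \<le> K0"
proof -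
  have mn: "m \<le> n" using assms by (metis le_trans mult_le_mono1 mult_1 le_trans[of 1 3 m] one_le_numeral)
  have n1: "n \<ge> 1" using assms mn by simp
  define F where "F k = - Af m k" for k
  define G where "G k = - (ln (real k) - Df n k)" for k
  have XFG: "VV n (Xf n m) = VV n (\<lambda>k. F k - G k)"
    by (rule VV_cong) (use decomp[of _ n m] mn in \<open>auto simp: F_def G_def\<close>)
  have c0: "\<bar>sqrt (VV n (\<lambda>k. F k - G k)) - sqrt (VV n F)\<bar> \<le> sqrt (VV n G)" by (rule sd_close[OF n1])
  have vF: "VV n F = VV n (Af m)" unfolding F_def by (rule VV_uminus)
  have vG: "VV n G = VV n (\<lambda>k. ln (real k) - Df n k)" unfolding G_def by (rule VV_uminus)
  have "VV n (\<lambda>k. ln (real k) - Df n k) \<le> EE n (\<lambda>k. (ln (real k) - Df n k - ln (real n))^2)"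
    by (rule VV_le[OF n1])
  also have "\<dots> \<le> EE n (\<lambda>k. 2 * (ln (real k) - ln (real n))^2 + 2 * (Df n k)^2)"
  proof (rule EE_mono)
    fix k
    have "0 \<le> (ln (real k) - ln (real n) + Df n k)^2" by simp
    thus "(ln (real k) - Df n k - ln (real n))^2 \<le> 2 * (ln (real k) - ln (real n))^2 + 2 * (Df n k)^2"
      by (simp add: power2_eq_square algebra_simps)
  qed
  also have "\<dots> = 2 * EE n (\<lambda>k. (ln (real k) - ln (real n))^2) + 2 * EE n (\<lambda>k. (Df n k)^2)"
    by (simp add: EE_add EE_cmult)
  also have "\<dots> \<le> 2 * 32 + 2 * KD"
    using L_part[OF n1] D_part[OF n1] unfolding KD_def by (intro add_mono mult_left_mono) auto
  finally have vY: "VV n (\<lambda>k. ln (real k) - Df n k) \<le> 64 + 2 * KD" by simp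
  have close: "\<bar>sqrt (VV n (Xf n m)) - sqrt (VV n (Af m))\<bar> \<le> sqrt (64 + 2 * KD)"
    using c0 vY unfolding XFG vF vG by (meson order.trans real_sqrt_le_mono)
  define t where "t = ln (real m) / sqrt 2"
  have lm: "ln (real m) \<ge> 1"
  proof -
    have "exp 1 \<le> (3::real)" using exp_le by linarith
    also have "\<dots> \<le> real m" using assms by simp
    finally have "ln (exp 1) \<le> ln (real m)" using assms by (subst ln_le_cancel_iff) auto
    thus ?thesis by simp
  qed
  have t0: "t > 0" unfolding t_def using lm by simp
  have tt: "t^2 = (ln (real m))^2 / 2" unfolding t_def by (simp add: power_divide)
  have m1: "1 \<le> m" using assms by simp
  have "\<bar>VV n (Af m) - t^2\<bar> \<le> \<bar>VV n (Af m) - S2 m\<bar> + \<bar>S2 m - (ln (real m))^2 / 2\<bar>"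
    unfolding tt by linarith
  also have "\<dots> \<le> KA + (2 * BB * ln (real m) + 1)"
    using A_part[OF m1 assms(2)] S2_asymp[OF m1] unfolding KA_def by linarith
  finally have vA: "\<bar>VV n (Af m) - t^2\<bar> \<le> KA + (2 * BB * ln (real m) + 1)" .
  have "\<bar>sqrt (VV n (Af m)) - t\<bar> \<le> \<bar>VV n (Af m) - t^2\<bar> / t"
    by (rule sqrt_close[OF VV_nonneg t0])
  also have "\<dots> \<le> (KA + (2 * BB * ln (real m) + 1)) / t" using vA t0 by (intro divide_right_mono) auto
  also have "\<dots> = sqrt 2 * (2 * BB + (KA + 1) / ln (real m))"
    unfolding t_def using lm by (simp add: field_simps)
  also have "\<dots> \<le> sqrt 2 * (2 * BB + 1 + KA)"
  proof -
    have ka: "KA \<ge> 0" unfolding KA_def using G2_nonneg by simp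
    have "(KA + 1) / ln (real m) \<le> (KA + 1) / 1" using lm ka by (intro divide_left_mono) auto
    thus ?thesis by (intro mult_left_mono) auto
  qed
  finally have "\<bar>sqrt (VV n (Af m)) - t\<bar> \<le> sqrt 2 * (2 * BB + 1 + KA)" .
  thus ?thesis using close unfolding K0_def t_def by linarith
qed



theorem theorem5p4:
  fixes m :: "nat \<Rightarrow> nat"
  assumes "\<forall>\<^sub>F n in at_top. real (m n) \<le> sqrt (real n)"
    and "filterlim m at_top at_top"
  shows "(\<lambda>n. measure_pmf.variance (pmf_of_set {1..n})
            (\<lambda>k. ln (real (Utilde n (m n) k))))
         \<sim>[at_top] (\<lambda>n. (1/2) * (ln (real (m n)))^2)"
proof -
  define sx where "sx n = sqrt (VV n (Xf n (m n)))" for n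
  define t where "t n = ln (real (m n)) / sqrt 2" for n
  have ev3: "eventually (\<lambda>n. 3 \<le> m n) at_top" using assms(2) by (simp add: filterlim_at_top)
  have evsq: "eventually (\<lambda>n. m n * m n \<le> n) at_top"
    using assms(1)
  proof eventually_elim
    case (elim n)
    have "real (m n) * real (m n) \<le> sqrt (real n) * sqrt (real n)"
      using elim by (intro mult_mono) auto
    hence "real (m n * m n) \<le> real n" by simp
    thus ?case by (simp only: of_nat_le_iff)
  qed
  have evb: "eventually (\<lambda>n. 3 \<le> m n \<and> m n * m n \<le> n \<and> \<bar>sx n - t n\<bar> \<le> K0) at_top"
    using ev3 evsq by eventually_elim (auto simp: sx_def t_def intro: main_bound)
  have lnlim: "filterlim (\<lambda>n. ln (real (m n))) at_top at_top"
    by (rule filterlim_compose[OF ln_at_top filterlim_compose[OF filterlim_real_sequentially assms(2)]])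
  have lim0: "((\<lambda>n. K0 * sqrt 2 / ln (real (m n))) \<longlongrightarrow> 0) at_top"
    by (rule tendsto_divide_0[OF tendsto_const filterlim_at_top_imp_at_infinity[OF lnlim]])
  have "((\<lambda>n. sx n / t n - 1) \<longlongrightarrow> 0) at_top"
  proof (rule Lim_null_comparison[OF _ lim0])
    show "eventually (\<lambda>n. norm (sx n / t n - 1) \<le> K0 * sqrt 2 / ln (real (m n))) at_top"
      using evb
    proof eventually_elim
      case (elim n)
      have "exp 1 \<le> (3::real)" using exp_le by linarith
      also have "\<dots> \<le> real (m n)" using elim by simp
      finally have "ln (exp 1) \<le> ln (real (m n))" using elim by (subst ln_le_cancel_iff) auto
      hence lm: "ln (real (m n)) > 0" by simp
      hence tp: "t n > 0" unfolding t_def by simp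
      have "norm (sx n / t n - 1) = \<bar>sx n - t n\<bar> / t n" using tp by (simp add: field_simps abs_div)
      also have "\<dots> \<le> K0 / t n" using elim tp by (intro divide_right_mono) auto
      also have "\<dots> = K0 * sqrt 2 / ln (real (m n))" unfolding t_def by simp
      finally show ?case .
    qed
  qed
  hence "((\<lambda>n. sx n / t n) \<longlongrightarrow> 1) at_top" by (rule LIM_zero_cancel)
  from tendsto_power[OF this, of 2]
  have sq: "((\<lambda>n. (sx n / t n)^2) \<longlongrightarrow> 1) at_top" by simp
  show ?thesis
  proof (rule asymp_equivI')
    have "eventually (\<lambda>n. (sx n / t n)^2 = measure_pmf.variance (pmf_of_set {1..n})
            (\<lambda>k. ln (real (Utilde n (m n) k))) / ((1/2) * (ln (real (m n)))^2)) at_top"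
      using evb
    proof eventually_elim
      case (elim n)
      have n1: "n \<ge> 1" using elim by (metis le_trans mult_le_mono1 mult_1 le_trans[of 1 3 "m n"] one_le_numeral)
      have "measure_pmf.variance (pmf_of_set {1..n}) (\<lambda>k. ln (real (Utilde n (m n) k)))
           = VV n (\<lambda>k. ln (real (Utilde n (m n) k)))" by (rule variance_eq_Va[OF n1])
      also have "\<dots> = VV n (Xf n (m n))" by (rule VV_cong) (auto simp: ln_Utilde)
      also have "\<dots> = (sx n)^2" unfolding sx_def using VV_nonneg by simp
      finally have v: "measure_pmf.variance (pmf_of_set {1..n}) (\<lambda>k. ln (real (Utilde n (m n) k))) = (sx n)^2" .
      have "(1/2) * (ln (real (m n)))^2 = (t n)^2" unfolding t_def by (simp add: power_divide)
      thus ?case using v by (simp add: power_divide)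
    qed
    thus "((\<lambda>n. measure_pmf.variance (pmf_of_set {1..n})
            (\<lambda>k. ln (real (Utilde n (m n) k))) / ((1/2) * (ln (real (m n)))^2)) \<longlongrightarrow> 1) at_top"
      by (rule Lim_transform_eventually[OF sq])
  qed
qed

end
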